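(* Fix a positive integer $n$ and a real number $\varepsilon>0$. Let $S\subset\mathbb{N}$ be a set of cardinality $N$, and let $\{v_1,\ldots,v_n\}$ be chosen uniformly at random from all $n$-element subsets of $S$. If $$\sqrt{\frac{n^3 3^{n-1}}{2^{n+1}\varepsilon^{2n}}}+1<N^{\frac{1}{n+1}},$$ then $$\mathbb{P}\left[\mathrm{ML}(v_1,\ldots,v_n)\ge\frac12-\varepsilon\right]>1-\frac{\left(2N^{\frac{1}{n+1}}+1\right)^n}{N-n}.$$
   Context: For a real number $x$, $\Vert x\Vert$ denotes the distance from $x$ to the nearest integer. For positive integers $v_1,\ldots,v_n$, the maximum loneliness is $\mathrm{ML}(v_1,\ldots,v_n)=\max_{t\in\mathbb{R}}\min_{1\le i\le n}\Vert t v_i\Vert$. Here $\mathbb{N}=\{1,2,3,\ldots\}$. *)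

theory Defs
  imports Complex_Main
begin

definition dist_nint :: "real \<Rightarrow> real" where
  "dist_nint x = \<bar>x - of_int (round x)\<bar>"

text \<open>Maximum loneliness of a finite nonempty set of positive integers V:
  the supremum over real t of min over v in V of the distance of t*v to the nearest integer
  (this supremum is attained, so it is the maximum).\<close>
definition max_loneliness :: "nat set \<Rightarrow> real" where
  "max_loneliness V = (SUP t::real. Min ((\<lambda>v. dist_nint (t * real v)) ` V))"

definition prob_subset :: "nat set \<Rightarrow> nat \<Rightarrow> (nat set \<Rightarrow> bool) \<Rightarrow> real" where
  "prob_subset S n P =
     real (card {V. V \<subseteq> S \<and> card V = n \<and> P V}) / real (card {V. V \<subseteq> S \<and> card V = n})"

end

theory Submission
  imports Defs "HOL-Analysis.Analysis" "HOL-Combinatorics.Multiset_Permutations"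
begin


lemma int_exp:
  fixes m :: int
  shows "((\<lambda>t::real. exp (2 * pi * \<i> * of_int m * of_real t)) has_integral (if m = 0 then 1 else 0)) {0..1}"
proof (cases "m = 0")
  case True
  then show ?thesis using has_integral_const_real[of "1::complex" 0 1] by simp
next
  case False
  define c where "c = 2 * pi * \<i> * of_int m"
  have c0: "c \<noteq> 0" using False by (simp add: c_def)
  have d: "((\<lambda>t. exp (c * of_real t) / c) has_vector_derivative exp (c * of_real t)) (at t within {0..1})" for t
  proof -
    have "((\<lambda>z. exp (c * z) / c) has_field_derivative exp (c * of_real t)) (at (of_real t))"
      using c0 by (auto intro!: derivative_eq_intros)
    then show ?thesis by (rule has_vector_derivative_real_field)
  qed
  have "((\<lambda>t. exp (c * of_real t)) has_integral (exp (c * of_real 1) / c - exp (c * of_real 0) / c)) {0..1}"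
    by (rule fundamental_theorem_of_calculus) (auto intro: d)
  moreover have "exp c = 1"
    using exp_integer_2pi[of "of_int m"] by (simp add: c_def mult_ac)
  ultimately show ?thesis using False by (simp add: c_def mult_ac)
qed



lemma sin_pow_expand:
  fixes x :: real and d :: nat
  shows "complex_of_real (sin (pi * x) ^ (2*d)) =
    (\<Sum>j\<in>{0..2*d}. complex_of_real ((-1)^(j+d) * real (2*d choose j) / 4^d) *
        exp (2 * pi * \<i> * of_int (int j - int d) * of_real x))"
proof -
  define u where "u = exp (\<i> * of_real (pi*x))"
  define z where "z = u^2"
  have u0: "u \<noteq> 0" by (simp add: u_def)
  have z0: "z \<noteq> 0" using u0 by (simp add: z_def)
  have s: "complex_of_real (sin (pi*x)) = (u - inverse u) / (2*\<i>)"
    unfolding u_def by (simp add: sin_exp_eq exp_minus flip: sin_of_real)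
  have s2: "complex_of_real (sin (pi*x)^2) = - ((z - 1)^2) / (4 * z)"
    using u0 unfolding s z_def of_real_power by (simp add: field_simps power2_eq_square)
  have "complex_of_real (sin (pi * x) ^ (2*d)) = (complex_of_real (sin (pi*x)^2))^d"
    by (simp add: power_mult)
  also have "\<dots> = (-1)^d * (z - 1)^(2*d) / (4^d * z^d)"
    unfolding s2 by (simp add: power_divide power_mult_distrib power_mult power_minus')
  also have "(z - 1)^(2*d) = (\<Sum>j\<le>2*d. of_nat (2*d choose j) * z^j * (-1)^(2*d-j))"
    using binomial_ring[of z "-1" "2*d"] by simp
  also have "(-1)^d * (\<Sum>j\<le>2*d. of_nat (2*d choose j) * z^j * (-1)^(2*d-j)) / (4^d * z^d)
     = (\<Sum>j\<le>2*d. (-1)^d * (of_nat (2*d choose j) * z^j * (-1)^(2*d-j)) / (4^d * z^d))"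
    by (simp add: sum_distrib_left sum_divide_distrib)
  also have "\<dots> = (\<Sum>j\<in>{0..2*d}. complex_of_real ((-1)^(j+d) * real (2*d choose j) / 4^d) *
        exp (2 * pi * \<i> * of_int (int j - int d) * of_real x))"
  proof (rule sum.cong)
    fix j assume j: "j \<in> {0..2*d}"
    have sign: "(-1::complex)^d * (-1)^(2*d-j) = (-1)^(j+d)"
    proof -
      have "(-1::complex)^d * (-1)^(2*d-j) = (-1)^(d + (2*d-j))" by (simp add: power_add)
      also have "\<dots> = (-1)^(j+d)"
      proof -
        have "even (d + (2*d-j)) = even (j+d)" using j by auto
        then show ?thesis by (simp add: minus_one_power_iff)
      qed
      finally show ?thesis .
    qed
    have e: "exp (2 * pi * \<i> * of_int (int j - int d) * of_real x) = z^j / z^d"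
    proof -
      have "exp (2 * pi * \<i> * of_int (int j - int d) * of_real x)
          = exp (of_nat j * (2 * \<i> * of_real (pi*x)) - of_nat d * (2 * \<i> * of_real (pi*x)))"
        by (simp add: algebra_simps)
      also have "\<dots> = exp (2 * \<i> * of_real (pi*x))^j / exp (2 * \<i> * of_real (pi*x))^d"
        by (simp add: exp_diff exp_of_nat_mult)
      also have "exp (2 * \<i> * of_real (pi*x)) = z"
        by (simp add: z_def u_def power2_eq_square mult_ac flip: exp_add)
      finally show ?thesis .
    qed
    show "(-1)^d * (of_nat (2*d choose j) * z^j * (-1)^(2*d-j)) / (4^d * z^d) =
      complex_of_real ((-1)^(j+d) * real (2*d choose j) / 4^d) *
        exp (2 * pi * \<i> * of_int (int j - int d) * of_real x)"
      unfolding e using z0 sign[symmetric] by (simp add: field_simps)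
  qed (auto)
  finally show ?thesis .
qed



definition beta :: "nat \<Rightarrow> nat \<Rightarrow> real" where
  "beta d j = (-1)^(j+d) * real (2*d choose j) / 4^d"

lemma prod_integral:
  fixes I :: "nat set" and f :: "nat \<Rightarrow> nat" and d :: nat
  assumes fin: "finite I"
    and norel: "\<And>J. J \<in> PiE I (\<lambda>_. {0..2*d}) \<Longrightarrow>
        (\<Sum>i\<in>I. (int (J i) - int d) * int (f i)) = 0 \<Longrightarrow> J = (\<lambda>i\<in>I. d)"
  shows "((\<lambda>t. \<Prod>i\<in>I. sin (pi * (t * real (f i))) ^ (2*d)) has_integral
          (real (2*d choose d) / 4^d) ^ card I) {0..1}"
proof -
  define m where "m J = (\<Sum>i\<in>I. (int (J i) - int d) * int (f i))" for J
  define c where "c J = (\<Prod>i\<in>I. complex_of_real (beta d (J i)))" for J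
  define P where "P = PiE I (\<lambda>_. {0..2*d})"
  have finP: "finite P" unfolding P_def using fin by (simp add: finite_PiE)
  have J0: "(\<lambda>i\<in>I. d) \<in> P" unfolding P_def by auto
  have eq: "complex_of_real (\<Prod>i\<in>I. sin (pi * (t * real (f i))) ^ (2*d))
      = (\<Sum>J\<in>P. c J * exp (2 * pi * \<i> * of_int (m J) * of_real t))" for t
  proof -
    have "complex_of_real (\<Prod>i\<in>I. sin (pi * (t * real (f i))) ^ (2*d))
        = (\<Prod>i\<in>I. \<Sum>j\<in>{0..2*d}. complex_of_real (beta d j) *
            exp (2 * pi * \<i> * of_int (int j - int d) * of_real (t * real (f i))))"
      by (simp only: of_real_prod sin_pow_expand beta_def)
    also have "\<dots> = (\<Sum>J\<in>P. \<Prod>i\<in>I. complex_of_real (beta d (J i)) *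
            exp (2 * pi * \<i> * of_int (int (J i) - int d) * of_real (t * real (f i))))"
      unfolding P_def by (rule prod_sum_PiE) (use fin in auto)
    also have "\<dots> = (\<Sum>J\<in>P. c J * exp (2 * pi * \<i> * of_int (m J) * of_real t))"
    proof (rule sum.cong[OF refl])
      fix J
      have "(\<Prod>i\<in>I. exp (2 * pi * \<i> * of_int (int (J i) - int d) * of_real (t * real (f i))))
          = exp (\<Sum>i\<in>I. 2 * pi * \<i> * of_int (int (J i) - int d) * of_real (t * real (f i)))"
        by (simp add: exp_sum fin)
      also have "(\<Sum>i\<in>I. 2 * pi * \<i> * of_int (int (J i) - int d) * of_real (t * real (f i)))
          = 2 * pi * \<i> * of_int (m J) * of_real t"
      proof -
        have "2 * pi * \<i> * of_int (m J) * of_real t = (2 * pi * \<i> * of_real t) * of_int (m J)"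
          by (simp add: mult_ac)
        also have "\<dots> = (\<Sum>i\<in>I. (2 * pi * \<i> * of_real t) * (of_int (int (J i) - int d) * of_int (int (f i))))"
          unfolding m_def of_int_sum of_int_mult by (rule sum_distrib_left)
        finally show ?thesis by (simp add: mult_ac)
      qed
      finally show "(\<Prod>i\<in>I. complex_of_real (beta d (J i)) *
            exp (2 * pi * \<i> * of_int (int (J i) - int d) * of_real (t * real (f i))))
          = c J * exp (2 * pi * \<i> * of_int (m J) * of_real t)"
        unfolding c_def by (simp add: prod.distrib)
    qed
    finally show ?thesis .
  qed
  have "((\<lambda>t. \<Sum>J\<in>P. c J * exp (2 * pi * \<i> * of_int (m J) * of_real t)) has_integral
        (\<Sum>J\<in>P. c J * (if m J = 0 then 1 else 0))) {0..1}"
  proof (rule has_integral_sum[OF finP])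
    fix J
    show "((\<lambda>t. c J * exp (2 * pi * \<i> * of_int (m J) * of_real t)) has_integral
        (c J * (if m J = 0 then 1 else 0))) {0..1}"
      by (rule has_integral_mult_right) (rule int_exp)
  qed
  also have "(\<Sum>J\<in>P. c J * (if m J = 0 then 1 else 0)) = c (\<lambda>i\<in>I. d)"
  proof -
    have "(\<Sum>J\<in>P. c J * (if m J = 0 then 1 else 0)) = (\<Sum>J\<in>P. if J = (\<lambda>i\<in>I. d) then c J else 0)"
    proof (rule sum.cong[OF refl])
      fix J assume JP: "J \<in> P"
      show "c J * (if m J = 0 then 1 else 0) = (if J = (\<lambda>i\<in>I. d) then c J else 0)"
      proof (cases "J = (\<lambda>i\<in>I. d)")
        case True
        have "m (\<lambda>i\<in>I. d) = 0" unfolding m_def by (rule sum.neutral) simp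
        then show ?thesis using True by simp
      next
        case False
        have "m J \<noteq> 0"
        proof
          assume "m J = 0"
          then have "J = (\<lambda>i\<in>I. d)" using norel[of J] JP unfolding m_def P_def by blast
          then show False using False by blast
        qed
        then show ?thesis using False by simp
      qed
    qed
    also have "\<dots> = c (\<lambda>i\<in>I. d)" using finP J0 by simp
    finally show ?thesis .
  qed
  also have "c (\<lambda>i\<in>I. d) = complex_of_real ((real (2*d choose d) / 4^d) ^ card I)"
    unfolding c_def beta_def by simp
  finally have h: "((\<lambda>t. complex_of_real (\<Prod>i\<in>I. sin (pi * (t * real (f i))) ^ (2*d))) has_integral
      complex_of_real ((real (2*d choose d) / 4^d) ^ card I)) {0..1}"
    by (simp only: eq)
  from has_integral_linear[OF h bounded_linear_Re] show ?thesis by (simp only: o_def Re_complex_of_real)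
qed



lemma central_step: "((2*Suc d) choose (Suc d)) * Suc d = 2 * (2*d+1) * ((2*d) choose d)"
proof -
  have 1: "Suc (Suc (2*d)) * (Suc (2*d) choose d) = (Suc (Suc (2*d)) choose Suc d) * Suc d"
    by (rule Suc_times_binomial_eq)
  have 2: "Suc (2*d) * ((2*d) choose d) = (Suc (2*d) choose Suc d) * Suc d"
    by (rule Suc_times_binomial_eq)
  have 3: "(Suc (2*d) choose d) = (Suc (2*d) choose Suc d)"
    using binomial_symmetric[of d "Suc (2*d)"] by (simp add: Suc_diff_le)
  have e: "2 * Suc d = Suc (Suc (2*d))" by simp
  have "((2*Suc d) choose (Suc d)) * Suc d * Suc d = Suc (Suc (2*d)) * (Suc (2*d) choose Suc d) * Suc d"
    by (metis 1 3 e)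
  also have "\<dots> = Suc (Suc (2*d)) * (Suc (2*d) * ((2*d) choose d))"
    using 2 by (simp only: mult.assoc)
  also have "\<dots> = 2 * (2*d+1) * ((2*d) choose d) * Suc d"
  proof -
    have "\<forall>c::nat. Suc (Suc (2*d)) * (Suc (2*d) * c) = 2*(2*d+1)*c*Suc d" by (simp add: algebra_simps)
    then show ?thesis by blast
  qed
  finally show ?thesis by (metis mult_right_cancel nat.simps(3))
qed

lemma central_lower: "d \<ge> 1 \<Longrightarrow> (16::real)^d \<le> 4 * real d * real ((2*d) choose d)^2"
proof (induction d rule: dec_induct)
  case base
  then show ?case by simp
next
  case (step d)
  define C where "C = real ((2*d) choose d)"
  define C' where "C' = real ((2*Suc d) choose (Suc d))"
  have rel: "C' * (d+1) = 2 * (2*d+1) * C"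
    unfolding C_def C'_def using central_step[of d] by (metis of_nat_mult of_nat_numeral of_nat_Suc Suc_eq_plus1 of_nat_add of_nat_1)
  have IH: "16^d \<le> 4 * real d * C^2" using step.IH by (simp add: C_def)
  have d1: "real d \<ge> 1" using step.hyps by simp
  have "(16::real)^(Suc d) * (real d + 1)^2 \<le> 4 * (real d + 1) * (2*(2*d+1)*C)^2"
  proof -
    have a: "4 * real d * (real d + 1) \<le> (2*real d+1)^2" by (simp add: power2_eq_square algebra_simps)
    have "16^d * (real d + 1) \<le> 4 * real d * C^2 * (real d + 1)"
      using IH by (intro mult_right_mono) auto
    also have "\<dots> = (4 * real d * (real d + 1)) * C^2" by simp
    also have "\<dots> \<le> (2*real d+1)^2 * C^2" using a by (intro mult_right_mono) auto
    finally have b: "16^d * (real d + 1) \<le> (2*real d+1)^2 * C^2" .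
    have "(16::real)^(Suc d) * (real d + 1)^2 = 16 * (real d + 1) * (16^d * (real d + 1))"
      by (simp add: power2_eq_square)
    also have "\<dots> \<le> 16 * (real d + 1) * ((2*real d+1)^2 * C^2)"
      using b by (intro mult_left_mono) auto
    also have "\<dots> = 4 * (real d + 1) * (2*(2*d+1)*C)^2"
      by (simp add: power2_eq_square algebra_simps)
    finally show ?thesis .
  qed
  also have "\<dots> = 4 * (real d + 1) * (C' * (real d + 1))^2"
  proof -
    have r2: "real (2*(2*d+1))*C = C' * (real d + 1)" using rel by (simp add: algebra_simps)
    show ?thesis by (subst r2) (rule refl)
  qed
  also have "\<dots> = 4 * (real d + 1) * C'^2 * (real d + 1)^2"
    by (simp add: power_mult_distrib)
  finally have "(16::real)^(Suc d) \<le> 4 * (real d + 1) * C'^2"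
    using d1 by (simp add: mult_le_cancel_right)
  then show ?case unfolding C'_def by (simp add: add.commute)
qed



lemma sin_lower: "0 \<le> (y::real) \<Longrightarrow> y - y^3/6 \<le> sin y"
proof -
  assume "0 \<le> y"
  have "\<bar>sin y - (\<Sum>m<3. sin_coeff m * y ^ m)\<bar> \<le> inverse (fact 3) * \<bar>y\<bar> ^ 3"
    by (rule Maclaurin_sin_bound)
  moreover have "(\<Sum>m<3. sin_coeff m * y ^ m) = y"
    by (simp add: sin_coeff_def numeral_3_eq_3 lessThan_Suc)
  ultimately have "\<bar>sin y - y\<bar> * 6 \<le> y^3" using \<open>0 \<le> y\<close> by (simp add: fact_numeral)
  then have "-(y^3/6) \<le> sin y - y" by (cases "sin y - y \<ge> 0") auto
  then show ?thesis by simp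
qed

lemma cos_sq_bound:
  fixes e :: real
  assumes "0 \<le> e" "e \<le> 1/2"
  shows "cos (pi*e)^2 \<le> 1 - 3*e^2"
proof -
  define y where "y = pi*e/2"
  have y0: "0 \<le> y" using assms by (simp add: y_def)
  have "pi * e \<le> 4 * e" using pi_less_4 assms by (intro mult_right_mono) auto
  then have y1: "y \<le> 1" using assms by (simp add: y_def)
  have "y - y^3/6 \<le> sin y" by (rule sin_lower[OF y0])
  moreover have "5/6 * y \<le> y - y^3/6"
  proof -
    have "y^2 \<le> 1" using y0 y1 by (simp add: power_le_one)
    then have "y * y^2 \<le> y" using y0 by (simp add: mult_left_le)
    then show ?thesis by (simp add: power3_eq_cube power2_eq_square)
  qed
  ultimately have s: "5/6 * y \<le> sin y" by linarith
  have "(5/6*y)^2 \<le> sin y ^ 2" using s y0 by (intro power_mono) auto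
  have c: "cos (pi*e) = 1 - 2 * sin y ^ 2" unfolding y_def using cos_double_sin[of "pi*e/2"] by simp
  have "cos (pi*e) \<le> 1 - 2 * (5/6*y)^2" using c \<open>(5/6*y)^2 \<le> sin y ^ 2\<close> by linarith
  also have "\<dots> = 1 - 25/72 * pi^2 * e^2" by (simp add: y_def power2_eq_square)
  also have "\<dots> \<le> 1 - 3 * e^2"
  proof -
    have "3*3 \<le> pi*pi" using pi_gt3 by (intro mult_mono) auto
    then have "9 \<le> pi^2" by (simp add: power2_eq_square)
    then have "3 * e^2 \<le> 25/72 * pi^2 * e^2" by (intro mult_right_mono) auto
    then show ?thesis by linarith
  qed
  finally have c1: "cos (pi*e) \<le> 1 - 3*e^2" .
  have pe1: "pi*e \<le> pi*(1/2)" using assms by (intro mult_left_mono) auto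
  have pe0: "0 \<le> pi*e" using assms by simp
  have c0: "0 \<le> cos (pi*e)" by (rule cos_ge_zero) (use pe0 pe1 pi_gt_zero in linarith)+
  have "cos (pi*e)^2 \<le> cos (pi*e)" using c0 by (simp add: power2_eq_square mult_left_le_one_le)
  then show ?thesis using c1 by linarith
qed

lemma sin_shift_sq: "sin (y + of_int r * pi)^2 = sin y ^ 2"
proof -
  have s0: "sin (of_int r * pi) = 0" using sin_zero_iff_int2 by blast
  have c1: "cos (of_int r * pi)^2 = 1" using sin_cos_squared_add[of "of_int r * pi"] s0 by simp
  have "sin (y + of_int r * pi) = sin y * cos (of_int r * pi)" by (simp add: sin_add s0)
  then show ?thesis using c1 by (simp add: power_mult_distrib)
qed

lemma dist_sin:
  assumes "0 \<le> e" "e \<le> 1/2" "cos (pi*e) \<le> \<bar>sin (pi*x)\<bar>"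
  shows "1/2 - e \<le> dist_nint x"
proof (rule ccontr)
  assume "\<not> ?thesis"
  then have lt: "dist_nint x < 1/2 - e" by simp
  define r where "r = round x"
  define u where "u = x - of_int r"
  have du: "dist_nint x = \<bar>u\<bar>" by (simp add: dist_nint_def u_def r_def)
  have "sin (pi*x) = sin (pi*u + of_int r * pi)" by (simp add: u_def algebra_simps)
  then have "sin (pi*x)^2 = sin (pi*u)^2" by (simp add: sin_shift_sq)
  also have "sin (pi*u)^2 = sin (pi*\<bar>u\<bar>)^2" by (cases "u \<ge> 0") auto
  finally have sq: "sin (pi*x)^2 = sin (pi*\<bar>u\<bar>)^2" .
  have a0: "0 \<le> pi*\<bar>u\<bar>" by simp
  have "\<bar>u\<bar> < 1/2 - e" using lt du by simp
  then have "pi*\<bar>u\<bar> < pi*(1/2 - e)" by (intro mult_strict_left_mono) auto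
  then have a1: "pi*\<bar>u\<bar> < pi/2 - pi*e" by (simp add: algebra_simps)
  have "pi*e \<ge> 0" using assms by simp
  have b1: "pi*e \<le> pi*(1/2)" using assms by (intro mult_left_mono) auto
  have "sin (pi*\<bar>u\<bar>) < sin (pi/2 - pi*e) \<longleftrightarrow> pi*\<bar>u\<bar> < pi/2 - pi*e"
    by (rule sin_mono_less_eq) (use a0 a1 b1 \<open>pi*e \<ge> 0\<close> pi_gt_zero in linarith)+
  then have "sin (pi*\<bar>u\<bar>) < sin (pi/2 - pi*e)" using a1 by blast
  also have "sin (pi/2 - pi*e) = cos (pi*e)" by (simp add: sin_cos_eq)
  finally have l: "sin (pi*\<bar>u\<bar>) < cos (pi*e)" .
  have s0: "0 \<le> sin (pi*\<bar>u\<bar>)" by (rule sin_ge_zero) (use a0 a1 \<open>pi*e \<ge> 0\<close> in linarith)+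
  have "sin (pi*\<bar>u\<bar>)^2 < cos (pi*e)^2" using l s0 by (intro power_strict_mono) auto
  moreover have "cos (pi*e)^2 \<le> \<bar>sin (pi*x)\<bar>^2"
    using assms(3) s0 l by (intro power_mono) auto
  ultimately show False using sq by simp
qed



lemma pow_aux: "n \<ge> 3 \<Longrightarrow> (9/16::real) \<le> 3^(n-1) * 4^(n-3) / 2^(n+1)"
proof -
  assume "n \<ge> 3"
  then obtain m where m: "n = m + 3" by (metis add.commute le_Suc_ex)
  have "(2::real)^m \<le> 3^m * 4^m"
  proof -
    have "(2::real)^m \<le> 4^m" by (intro power_mono) auto
    also have "\<dots> \<le> 3^m * 4^m" by (simp add: one_le_power)
    finally show ?thesis .
  qed
  have "(3::real)^(n-1) * 4^(n-3) / 2^(n+1) = 9/16 * (3^m * 4^m) / 2^m"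
    by (simp add: m power_add field_simps numeral_eq_Suc)
  have "9/16 \<le> 9/16 * (3^m * 4^m) / (2::real)^m" using \<open>(2::real)^m \<le> 3^m * 4^m\<close>
    by (simp add: field_simps)
  moreover note \<open>(3::real)^(n-1) * 4^(n-3) / 2^(n+1) = 9/16 * (3^m * 4^m) / 2^m\<close>
  ultimately show ?thesis by simp
qed

lemma numeric:
  fixes n D :: nat and e :: real
  assumes n3: "n \<ge> 3" and e0: "0 < e" and e1: "e < 1/2" and D1: "D \<ge> 1"
    and H: "real n^3 * 3^(n-1) / 2^(n+1) < real D^2 * e^(2*n)"
  shows "cos (pi*e)^(2*D) < (real (2*D choose D) / 4^D)^n"
proof -
  define \<beta> where "\<beta> = real (2*D choose D) / 4^D"
  have b0: "0 \<le> \<beta>" by (simp add: \<beta>_def)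
  have cb: "16^D \<le> 4 * real D * real (2*D choose D)^2" using central_lower D1 by blast
  have b1: "1 \<le> \<beta>^2 * (4 * real D)"
  proof -
    have q: "(4::real)^D * 4^D = 16^D" by (simp flip: power_mult_distrib)
    have "\<beta>^2 * (4 * real D) = 4 * real D * real (2*D choose D)^2 / 16^D"
      by (simp add: \<beta>_def power_divide power2_eq_square q)
    then show ?thesis using cb by simp
  qed
  have bn: "1 \<le> \<beta>^(2*n) * (4 * real D)^n"
  proof -
    have "1 \<le> (\<beta>^2 * (4 * real D))^n" using b1 by (rule one_le_power)
    then show ?thesis by (simp add: power_mult power_mult_distrib)
  qed
  define Y where "Y = real D^2 * e^6"
  have "e^2 \<le> (1/2)^2" using e0 e1 by (intro power_mono) auto
  then have e2: "e^2 \<le> 1/4" by (simp add: power2_eq_square)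
  have "2*n = 6 + 2*(n-3)" using n3 by simp
  then have "e^(2*n) = e^6 * (e^2)^(n-3)"
    by (metis power_add power_mult)
  also have "\<dots> \<le> e^6 * (1/4)^(n-3)"
    using e2 e0 by (intro mult_left_mono power_mono) auto
  finally have "real D^2 * e^(2*n) \<le> Y * (1/4)^(n-3)" unfolding Y_def
    by (simp add: mult_left_mono mult.assoc)
  with H have "real n^3 * 3^(n-1) / 2^(n+1) < Y * (1/4)^(n-3)" by linarith
  then have "real n^3 * (3^(n-1) * 4^(n-3) / 2^(n+1)) < Y"
    by (simp add: field_simps power_one_over)
  moreover have "real n^3 * (9/16) \<le> real n^3 * (3^(n-1) * 4^(n-3) / 2^(n+1))"
    using pow_aux[OF n3] by (intro mult_left_mono) auto
  ultimately have Y1: "9/16 * real n^3 < Y" by linarith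
  have n1: "real n \<ge> 1" using n3 by simp
  have "(9/16 * real n^3)^3 \<le> Y^3" using Y1 n1 by (intro power_mono) auto
  moreover have "(9/16 * real n^3)^3 = (9/16)^3 * (real n^3)^3" by (rule power_mult_distrib)
  moreover have "(real n^3)^3 = real n^9" by (simp flip: power_mult)
  moreover have "(9/16::real)^3 = 729/4096" by (simp add: power3_eq_cube)
  ultimately have Y3: "729/4096 * real n^9 \<le> Y^3" by simp
  have ee: "e^16 * real D^6 * e^2 = Y^3" by (simp add: Y_def power_mult_distrib flip: power_mult power_add)
  have "(64 * real n^4)^2 \<le> (81 * e^8 * real D^3)^2"
  proof -
    have "(64 * real n^4)^2 = 4096 * real n^8" by (simp flip: power_mult)
    also have "\<dots> \<le> 4670 * real n^9"
    proof -
      have "real n^8 \<le> real n^9" using n1 by (intro power_increasing) auto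
      moreover have "0 \<le> real n^8" by simp
      ultimately show ?thesis by linarith
    qed
    also have "\<dots> \<le> 26244 * Y^3" using Y3 zero_le_power[of "real n" 9] by linarith
    also have "\<dots> \<le> 6561 * Y^3 / e^2"
    proof -
      have "0 \<le> Y^3" unfolding Y_def by simp
      moreover have "4 * e^2 \<le> 1" using e2 by simp
      ultimately have "6561 * Y^3 * (4 * e^2) \<le> 6561 * Y^3 * 1"
        by (intro mult_left_mono) auto
      then have "26244 * Y^3 * e^2 \<le> 6561 * Y^3" by simp
      then show ?thesis using e0 by (simp add: field_simps)
    qed
    also have "\<dots> = (81 * e^8 * real D^3)^2"
      using e0 ee by (simp add: field_simps power_mult_distrib flip: power_mult)
    finally show ?thesis .
  qed
  then have key: "64 * real n^4 \<le> 81 * e^8 * real D^3"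
    by (rule power2_le_imp_le) (use e0 in simp)
  define s where "s = sqrt (sqrt (4 * real D))"
  have s0: "0 < s" using D1 by (simp add: s_def)
  have "s^4 = (s^2)^2" by (simp flip: power_mult)
  also have "s^2 = sqrt (4 * real D)" by (simp add: s_def)
  finally have s4: "s^4 = 4 * real D" by simp
  have "(2 * real n * s)^4 \<le> (3 * e^2 * real D)^4"
  proof -
    have "(2 * real n * s)^4 = 64 * real n^4 * real D" by (simp add: power_mult_distrib s4)
    also have "\<dots> \<le> 81 * e^8 * real D^3 * real D" using key by (intro mult_right_mono) auto
    also have "\<dots> = (3 * e^2 * real D)^4"
    proof -
      have "real D^3 * real D = real D^4" by (simp add: power_Suc2[symmetric] numeral_eq_Suc del: power_Suc)
      then show ?thesis by (simp add: power_mult_distrib flip: power_mult)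
    qed
    finally show ?thesis .
  qed
  then have ns: "2 * real n * s \<le> 3 * e^2 * real D"
    using power_mono_iff[of "2 * real n * s" "3 * e^2 * real D" 4] s0 e0 by simp
  have "ln (4 * real D) = ln (s^4)" by (simp add: s4)
  also have "\<dots> = 4 * ln s" using s0 by (simp add: ln_realpow)
  finally have lnD: "ln (4 * real D) < 4 * s" using ln_less_self[OF s0] by simp
  have "real n * ln (4 * real D) < real n * (4 * s)" using lnD n1 by simp
  also have "\<dots> \<le> 6 * e^2 * real D" using ns by (simp add: mult_ac)
  finally have lnlt: "real n * ln (4 * real D) < 6 * e^2 * real D" .
  have pw: "(4 * real D)^n < exp (6 * e^2 * real D)"
  proof -
    have "(4 * real D)^n = exp (real n * ln (4 * real D))"
      using D1 by (simp add: exp_ln_iff ln_realpow[symmetric])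
    then show ?thesis using lnlt by simp
  qed
  have c2: "cos (pi*e)^2 \<le> exp (-(3 * e^2))"
    using cos_sq_bound[of e] e0 e1 exp_ge_add_one_self[of "-(3*e^2)"] by simp
  have "cos (pi*e)^(4*D) = (cos (pi*e)^2)^(2*D)" by (simp flip: power_mult)
  also have "\<dots> \<le> exp (-(3 * e^2))^(2*D)" using c2 by (intro power_mono) auto
  also have "\<dots> = exp (-(6 * e^2 * real D))" by (simp flip: exp_of_nat_mult)
  finally have c4: "cos (pi*e)^(4*D) \<le> exp (-(6 * e^2 * real D))" .
  have "cos (pi*e)^(4*D) * (4 * real D)^n < 1"
  proof -
    have "cos (pi*e)^(4*D) * (4 * real D)^n \<le> exp (-(6 * e^2 * real D)) * (4 * real D)^n"
      using c4 by (intro mult_right_mono) auto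
    also have "\<dots> < exp (-(6 * e^2 * real D)) * exp (6 * e^2 * real D)"
      using pw by (intro mult_strict_left_mono) auto
    also have "\<dots> = 1" by (simp flip: exp_add)
    finally show ?thesis .
  qed
  then have "cos (pi*e)^(4*D) * (4 * real D)^n < \<beta>^(2*n) * (4 * real D)^n"
    using bn by linarith
  then have "cos (pi*e)^(4*D) < \<beta>^(2*n)"
    using D1 by (simp add: mult_less_cancel_right)
  then have "(cos (pi*e)^(2*D))^2 < (\<beta>^n)^2" by (simp flip: power_mult add: mult_ac)
  then have "cos (pi*e)^(2*D) < \<beta>^n"
    by (rule power_less_imp_less_base) (use b0 in simp)
  then show ?thesis by (simp add: \<beta>_def)
qed



lemma dist_nint_eq:
  assumes "\<bar>x - of_int m\<bar> \<le> 1/2"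
  shows "dist_nint x = \<bar>x - of_int m\<bar>"
proof -
  define r where "r = round x"
  have le: "\<bar>x - of_int r\<bar> \<le> \<bar>x - of_int m\<bar>" unfolding r_def by (rule round_diff_minimal)
  have "\<bar>x - of_int m\<bar> \<le> \<bar>x - of_int r\<bar>"
  proof (cases "r = m")
    case False
    then have "1 \<le> \<bar>r - m\<bar>" by (cases "r < m") auto
    then have "1 \<le> \<bar>of_int r - (of_int m::real)\<bar>"
      by (metis of_int_1_le_iff of_int_abs of_int_diff)
    then show ?thesis using assms by linarith
  qed simp
  with le show ?thesis by (simp add: dist_nint_def r_def)
qed

lemma good2:
  fixes a b D :: nat and e :: real
  assumes a0: "a > 0" and b0: "b > 0" and e0: "0 < e" and e1: "e < 1/2"
    and H: "3 < real D^2 * e^4"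
    and norel: "\<And>k. k \<in> PiE {..<2} (\<lambda>_. {-int D..int D}) \<Longrightarrow>
       k 0 * int a + k 1 * int b = 0 \<Longrightarrow> k = (\<lambda>i\<in>{..<2::nat}. 0)"
  shows "\<exists>t. 1/2 - e \<le> dist_nint (t * real a) \<and> 1/2 - e \<le> dist_nint (t * real b)"
proof -
  define g where "g = gcd (int a) (int b)"
  have g0: "g > 0" using a0 by (simp add: g_def)
  have ex: "\<exists>a' b'. int a = a' * g \<and> int b = b' * g \<and> coprime a' b'"
    unfolding g_def by (rule gcd_coprime_exists) (use g0 in \<open>simp add: g_def\<close>)
  then obtain a' b' where ab: "int a = a' * g" "int b = b' * g" "coprime a' b'" by blast
  have a'0: "a' > 0" using ab(1) a0 g0 by (metis of_nat_0_less_iff zero_less_mult_pos2)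
  have b'0: "b' > 0" using ab(2) b0 g0 by (metis of_nat_0_less_iff zero_less_mult_pos2)
  obtain u v where uv: "u * a' + v * b' = 1"
    using bezout_int[of a' b'] ab(3) by (auto simp: coprime_iff_gcd_eq_1)
  define s where "s = a' + b'"
  define h where "h = s div 2"
  define w where "w = u - v"
  have ws: "w * a' = 1 - v * s" using uv by (simp add: w_def s_def algebra_simps)
  define k where "k = (\<lambda>i\<in>{..<2::nat}. if i = 0 then b' else - a')"
  have "k 0 * int a + k 1 * int b = 0" by (simp add: k_def ab)
  moreover have "k \<noteq> (\<lambda>i\<in>{..<2::nat}. 0)"
  proof
    assume "k = (\<lambda>i\<in>{..<2::nat}. 0)"
    then have "k 0 = 0" by simp
    then show False using b'0 by (simp add: k_def)
  qed
  ultimately have "k \<notin> PiE {..<2} (\<lambda>_. {-int D..int D})" using norel by blast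
  then have "\<not> (b' \<le> int D \<and> a' \<le> int D)"
    unfolding k_def using a'0 b'0 by (auto simp: restrict_PiE_iff split: if_splits)
  then have sD: "int D < s" unfolding s_def using a'0 b'0 by linarith
  have s0: "s > 0" using sD by simp
  have De: "1 < real D * e^2"
  proof (rule ccontr)
    assume "\<not> ?thesis"
    then have "real D * e^2 \<le> 1" by simp
    then have "(real D * e^2)^2 \<le> 1^2" by (intro power_mono) (use e0 in auto)
    then show False using H by (simp add: power_mult_distrib flip: power_mult)
  qed
  have "e * e \<le> e * (1/2)" using e0 e1 by (intro mult_left_mono) auto
  then have "real D * (e * e) \<le> real D * (e * (1/2))" by (rule mult_left_mono) simp
  then have "real D * e^2 \<le> real D * e * (1/2)" by (simp add: power2_eq_square mult.assoc)
  then have "2 < real D * e" using De by linarith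
  moreover have "real D * e \<le> real_of_int s * e" using sD e0 by (intro mult_right_mono) auto
  ultimately have se: "1 \<le> 2 * real_of_int s * e" by linarith
  have h1: "2 * h \<le> s" "s \<le> 2 * h + 1" unfolding h_def by auto
  have hs0: "0 \<le> real_of_int h / real_of_int s" using h1 s0 by simp
  have hs1: "real_of_int h / real_of_int s \<le> 1/2"
    using h1 s0 by (simp add: field_simps)
  have hs2: "1/2 - e \<le> real_of_int h / real_of_int s"
  proof -
    have "real_of_int s \<le> 2 * real_of_int h + 1" using h1 by linarith
    then have q: "(real_of_int s - 1)/2 \<le> real_of_int h" by (simp add: field_simps)
    have "(real_of_int s - 1)/2 / real_of_int s \<le> real_of_int h / real_of_int s"
      using q s0 by (intro divide_right_mono) auto
    moreover have "1/2 - 1/(2 * real_of_int s) = (real_of_int s - 1)/2 / real_of_int s"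
      using s0 by (simp add: field_simps)
    ultimately have "1/2 - 1/(2 * real_of_int s) \<le> real_of_int h / real_of_int s" by simp
    moreover have "1/(2 * real_of_int s) \<le> e" using se s0 by (simp add: field_simps)
    ultimately show ?thesis by linarith
  qed
  define t where "t = real_of_int (w * h) / real_of_int (g * s)"
  have wha: "w * h * a' = h - h * v * s"
  proof -
    have "w * h * a' = h * (w * a')" by (simp add: mult_ac)
    also have "\<dots> = h * (1 - v * s)" using ws by simp
    also have "\<dots> = h - h * v * s" by (simp add: algebra_simps)
    finally show ?thesis .
  qed
  have sne: "real_of_int s \<noteq> 0" using s0 by simp
  have gne: "real_of_int g \<noteq> 0" using g0 by simp
  have ra: "real a = real_of_int a' * real_of_int g" using ab(1) by (metis of_int_of_nat_eq of_int_mult)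
  have rb: "real b = real_of_int b' * real_of_int g" using ab(2) by (metis of_int_of_nat_eq of_int_mult)
  have ta: "t * real a = real_of_int h / real_of_int s - real_of_int (h * v)"
  proof -
    have "t * real a = real_of_int (w * h * a') / real_of_int s"
      unfolding t_def ra using sne gne by (simp add: field_simps)
    also have "\<dots> = real_of_int (h - h * v * s) / real_of_int s" by (simp only: wha)
    also have "\<dots> = real_of_int h / real_of_int s - real_of_int (h * v)"
      using sne by (simp add: field_simps)
    finally show ?thesis .
  qed
  have tb: "t * real b = real_of_int (w * h) - (real_of_int h / real_of_int s - real_of_int (h * v))"
  proof -
    have "t * real b = real_of_int (w * h * b') / real_of_int s"
      unfolding t_def rb using sne gne by (simp add: field_simps)
    also have "w * h * b' = w * h * s - w * h * a'" by (simp add: s_def algebra_simps)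
    also have "real_of_int (w * h * s - w * h * a') / real_of_int s
        = real_of_int (w * h) - real_of_int (w * h * a') / real_of_int s"
      using sne by (simp add: field_simps)
    also have "real_of_int (w * h * a') / real_of_int s = real_of_int h / real_of_int s - real_of_int (h * v)"
      unfolding wha using sne by (simp add: field_simps)
    finally show ?thesis .
  qed
  have xa: "t * real a - real_of_int (- (h * v)) = real_of_int h / real_of_int s" by (simp add: ta)
  have xb: "t * real b - real_of_int (w * h + h * v) = - (real_of_int h / real_of_int s)" by (simp add: tb)
  have aa: "\<bar>real_of_int h / real_of_int s\<bar> = real_of_int h / real_of_int s" by (rule abs_of_nonneg[OF hs0])
  have ab': "\<bar>- (real_of_int h / real_of_int s)\<bar> = real_of_int h / real_of_int s" unfolding abs_minus_cancel by (rule aa)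
  have "\<bar>t * real a - real_of_int (- (h * v))\<bar> \<le> 1/2" unfolding xa aa by (rule hs1)
  then have "dist_nint (t * real a) = \<bar>t * real a - real_of_int (- (h * v))\<bar>" by (rule dist_nint_eq)
  then have da: "dist_nint (t * real a) = real_of_int h / real_of_int s" unfolding xa aa .
  have "\<bar>t * real b - real_of_int (w * h + h * v)\<bar> \<le> 1/2" unfolding xb ab' by (rule hs1)
  then have "dist_nint (t * real b) = \<bar>t * real b - real_of_int (w * h + h * v)\<bar>" by (rule dist_nint_eq)
  then have db: "dist_nint (t * real b) = real_of_int h / real_of_int s" unfolding xb ab' .
  show ?thesis using da db hs2 by (intro exI[of _ t]) simp
qed



lemma dist_nint_nonneg: "0 \<le> dist_nint x" by (simp add: dist_nint_def)
lemma dist_nint_le_half: "dist_nint x \<le> 1/2"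
  unfolding dist_nint_def using of_int_round_abs_le[of x] by (simp add: abs_minus_commute)

lemma ml_lower:
  assumes "finite V" "V \<noteq> {}" "\<forall>v\<in>V. c \<le> dist_nint (t * real v)"
  shows "c \<le> max_loneliness V"
proof -
  have "c \<le> Min ((\<lambda>v. dist_nint (t * real v)) ` V)" using assms by simp
  also have "\<dots> \<le> (SUP t::real. Min ((\<lambda>v. dist_nint (t * real v)) ` V))"
  proof (rule cSUP_upper)
    show "bdd_above (range (\<lambda>t. Min ((\<lambda>v. dist_nint (t * real v)) ` V)))"
    proof (rule bdd_aboveI)
      fix y assume "y \<in> range (\<lambda>t. Min ((\<lambda>v. dist_nint (t * real v)) ` V))"
      then obtain t' where y: "y = Min ((\<lambda>v. dist_nint (t' * real v)) ` V)" by auto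
      obtain v where "v \<in> V" using assms by auto
      then have "y \<le> dist_nint (t' * real v)" unfolding y using assms by (intro Min_le) auto
      then show "y \<le> 1/2" using dist_nint_le_half[of "t' * real v"] by linarith
    qed
  qed simp
  finally show ?thesis unfolding max_loneliness_def .
qed



lemma good3:
  fixes xs :: "nat list" and n D :: nat and e :: real
  assumes len: "length xs = n" and n3: "n \<ge> 3" and e0: "0 < e" and e1: "e < 1/2" and D1: "D \<ge> 1"
    and H: "real n^3 * 3^(n-1) / 2^(n+1) < real D^2 * e^(2*n)"
    and norel: "\<And>k. k \<in> PiE {..<n} (\<lambda>_. {-int D..int D}) \<Longrightarrow>
       (\<Sum>i<n. k i * int (xs!i)) = 0 \<Longrightarrow> k = (\<lambda>i\<in>{..<n}. 0)"
  shows "\<exists>t. \<forall>i<n. 1/2 - e \<le> dist_nint (t * real (xs!i))"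
proof (rule ccontr)
  assume "\<not> ?thesis"
  then have bad: "\<forall>t. \<exists>i<n. dist_nint (t * real (xs!i)) < 1/2 - e" by (auto simp: not_le)
  define C where "C = cos (pi*e)"
  have pe1: "pi*e \<le> pi*(1/2)" using e1 by (intro mult_left_mono) auto
  have pe0: "0 \<le> pi*e" using e0 by simp
  have C0: "0 \<le> C" unfolding C_def by (rule cos_ge_zero) (use pe0 pe1 pi_gt_zero in linarith)+
  have badsin: "\<exists>i<n. \<bar>sin (pi * (t * real (xs!i)))\<bar> < C" for t
  proof -
    obtain i where i: "i < n" "dist_nint (t * real (xs!i)) < 1/2 - e" using bad by blast
    have "\<not> (cos (pi*e) \<le> \<bar>sin (pi * (t * real (xs!i)))\<bar>)"
      using dist_sin[of e "t * real (xs!i)"] e0 e1 i(2) by linarith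
    then show ?thesis using i(1) unfolding C_def by (auto simp: not_le)
  qed
  have Gle: "(\<Prod>i\<in>{..<n}. sin (pi * (t * real (xs!i))) ^ (2*D)) \<le> C^(2*D)" for t
  proof -
    obtain i0 where i0: "i0 < n" "\<bar>sin (pi * (t * real (xs!i0)))\<bar> < C" using badsin by blast
    let ?f = "\<lambda>i. sin (pi * (t * real (xs!i))) ^ (2*D)"
    have f01: "0 \<le> ?f i \<and> ?f i \<le> 1" for i
    proof
      show "0 \<le> ?f i" by (simp add: zero_le_even_power)
      have "?f i = \<bar>sin (pi * (t * real (xs!i)))\<bar> ^ (2*D)" by (simp add: power_even_abs)
      also have "\<dots> \<le> 1" by (rule power_le_one) auto
      finally show "?f i \<le> 1" .
    qed
    have "(\<Prod>i\<in>{..<n}. ?f i) = ?f i0 * (\<Prod>i\<in>{..<n}-{i0}. ?f i)"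
      by (rule prod.remove) (use i0 in auto)
    also have "\<dots> \<le> C^(2*D) * 1"
    proof (rule mult_mono)
      have "?f i0 = \<bar>sin (pi * (t * real (xs!i0)))\<bar> ^ (2*D)" by (simp add: power_even_abs)
      also have "\<dots> \<le> C^(2*D)" using i0(2) by (intro power_mono) auto
      finally show "?f i0 \<le> C^(2*D)" .
      show "(\<Prod>i\<in>{..<n}-{i0}. ?f i) \<le> 1" by (rule prod_le_1) (use f01 in auto)
      show "0 \<le> C^(2*D)" using C0 by simp
      show "0 \<le> (\<Prod>i\<in>{..<n}-{i0}. ?f i)" by (rule prod_nonneg) (use f01 in auto)
    qed
    finally show ?thesis by simp
  qed
  have int: "((\<lambda>t. \<Prod>i\<in>{..<n}. sin (pi * (t * real (xs!i))) ^ (2*D)) has_integral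
          (real (2*D choose D) / 4^D) ^ card {..<n}) {0..1}"
  proof (rule prod_integral)
    fix J assume J: "J \<in> PiE {..<n} (\<lambda>_. {0..2*D})"
      and s: "(\<Sum>i\<in>{..<n}. (int (J i) - int D) * int (xs!i)) = 0"
    define k where "k = (\<lambda>i\<in>{..<n}. int (J i) - int D)"
    have kin: "k \<in> PiE {..<n} (\<lambda>_. {-int D..int D})"
      unfolding k_def restrict_PiE_iff
    proof (intro ballI)
      fix i assume "i \<in> {..<n}"
      then have "J i \<le> 2*D" using J by (auto simp: PiE_iff)
      then have "int (J i) \<le> int (2*D)" by (simp only: of_nat_le_iff)
      then show "int (J i) - int D \<in> {-int D..int D}" by simp
    qed
    have "(\<Sum>i<n. k i * int (xs!i)) = (\<Sum>i\<in>{..<n}. (int (J i) - int D) * int (xs!i))"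
      by (rule sum.cong) (auto simp: k_def)
    then have k0: "k = (\<lambda>i\<in>{..<n}. 0)" using norel[OF kin] s by simp
    show "J = (\<lambda>i\<in>{..<n}. D)"
    proof
      fix i show "J i = (\<lambda>i\<in>{..<n}. D) i"
      proof (cases "i < n")
        case True
        then have "k i = 0" using k0 by simp
        then show ?thesis using True by (simp add: k_def)
      next
        case False
        then show ?thesis using J by (auto simp: PiE_def extensional_def)
      qed
    qed
  qed simp
  have const: "((\<lambda>t::real. C^(2*D)) has_integral C^(2*D)) {0..1}"
    using has_integral_const_real[of "C^(2*D)" 0 1] by simp
  have "(real (2*D choose D) / 4^D) ^ n \<le> C^(2*D)"
    using has_integral_le[OF int const] Gle by simp
  moreover have "C^(2*D) < (real (2*D choose D) / 4^D) ^ n"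
    unfolding C_def by (rule numeric[OF n3 e0 e1 D1 H])
  ultimately show False by linarith
qed



definition dlists :: "nat \<Rightarrow> nat set \<Rightarrow> nat list set" where
  "dlists n S = {xs. length xs = n \<and> distinct xs \<and> set xs \<subseteq> S}"

lemma finite_dlists: "finite S \<Longrightarrow> finite (dlists n S)"
proof -
  assume "finite S"
  then have "finite {xs. set xs \<subseteq> S \<and> length xs = n}" by (rule finite_lists_length_eq)
  then show ?thesis unfolding dlists_def by (rule rev_finite_subset) auto
qed

lemma card_dlists_step:
  assumes "finite S" "1 \<le> n" "n \<le> card S"
  shows "card (dlists n S) = (card S - n + 1) * card (dlists (n-1) S)"
proof -
  have "card (dlists n S) = \<Prod>{card S - n + 1 .. card S}"
    unfolding dlists_def using assms by (intro card_lists_distinct_length_eq) auto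
  also have "\<dots> = (card S - n + 1) * \<Prod>{Suc (card S - n + 1) .. card S}"
    using assms by (intro prod.atLeast_Suc_atMost) auto
  also have "Suc (card S - n + 1) = card S - (n-1) + 1" using assms by simp
  also have "\<Prod>{card S - (n-1) + 1 .. card S} = card (dlists (n-1) S)"
    unfolding dlists_def using assms by (intro card_lists_distinct_length_eq[symmetric]) auto
  finally show ?thesis .
qed

lemma nth_del:
  assumes "j < length xs" "i < length xs - 1"
  shows "(take j xs @ drop (Suc j) xs) ! i = (if i < j then xs ! i else xs ! Suc i)"
  using assms by (auto simp: nth_append min_def)

lemma card_rel_le:
  fixes k :: "nat \<Rightarrow> int"
  assumes fin: "finite S" and j: "j < n" and kj: "k j \<noteq> 0"
  shows "card {xs \<in> dlists n S. (\<Sum>i<n. k i * int (xs!i)) = 0} \<le> card (dlists (n-1) S)"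
proof -
  define A where "A = {xs \<in> dlists n S. (\<Sum>i<n. k i * int (xs!i)) = 0}"
  define h where "h xs = take j xs @ drop (Suc j) xs" for xs :: "nat list"
  have img: "h ` A \<subseteq> dlists (n-1) S"
  proof
    fix ys assume "ys \<in> h ` A"
    then obtain xs where xs: "xs \<in> A" "ys = h xs" by auto
    then have l: "length xs = n" "distinct xs" "set xs \<subseteq> S" by (auto simp: A_def dlists_def)
    have "length ys = n - 1" using xs(2) l j by (simp add: h_def)
    moreover have "distinct ys"
    proof -
      have "distinct (take j xs @ drop (Suc j) xs)"
      proof -
        have "xs = take j xs @ (xs!j # drop (Suc j) xs)" using j l(1) by (simp add: id_take_nth_drop)
        then have "distinct (take j xs @ (xs!j # drop (Suc j) xs))" using l(2) by simp
        then show ?thesis by simp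
      qed
      then show ?thesis using xs(2) by (simp add: h_def)
    qed
    moreover have "set ys \<subseteq> S"
      using xs(2) l(3) set_take_subset[of j xs] set_drop_subset[of "Suc j" xs] by (auto simp: h_def)
    ultimately show "ys \<in> dlists (n-1) S" by (simp add: dlists_def)
  qed
  have inj: "inj_on h A"
  proof
    fix xs ys assume xs: "xs \<in> A" and ys: "ys \<in> A" and e: "h xs = h ys"
    have lx: "length xs = n" and ly: "length ys = n" using xs ys by (auto simp: A_def dlists_def)
    have oth: "xs ! i = ys ! i" if "i < n" "i \<noteq> j" for i
    proof (cases "i < j")
      case True
      have "h xs ! i = xs ! i" using nth_del[of j xs i] True that lx j by (simp add: h_def)
      moreover have "h ys ! i = ys ! i" using nth_del[of j ys i] True that ly j by (simp add: h_def)
      ultimately show ?thesis using e by simp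
    next
      case False
      then have i1: "i - 1 < n - 1" "\<not> (i - 1 < j)" "Suc (i - 1) = i" using that by auto
      have "h xs ! (i-1) = xs ! i" using nth_del[of j xs "i-1"] i1 lx j by (simp add: h_def)
      moreover have "h ys ! (i-1) = ys ! i" using nth_del[of j ys "i-1"] i1 ly j by (simp add: h_def)
      ultimately show ?thesis using e by simp
    qed
    have sx: "(\<Sum>i<n. k i * int (xs!i)) = k j * int (xs!j) + (\<Sum>i\<in>{..<n}-{j}. k i * int (xs!i))"
      by (rule sum.remove) (use j in auto)
    have sy: "(\<Sum>i<n. k i * int (ys!i)) = k j * int (ys!j) + (\<Sum>i\<in>{..<n}-{j}. k i * int (ys!i))"
      by (rule sum.remove) (use j in auto)
    have "(\<Sum>i\<in>{..<n}-{j}. k i * int (xs!i)) = (\<Sum>i\<in>{..<n}-{j}. k i * int (ys!i))"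
      by (rule sum.cong) (auto simp: oth)
    moreover have "(\<Sum>i<n. k i * int (xs!i)) = 0" "(\<Sum>i<n. k i * int (ys!i)) = 0"
      using xs ys by (auto simp: A_def)
    ultimately have "k j * int (xs!j) = k j * int (ys!j)" using sx sy by linarith
    then have "xs ! j = ys ! j" using kj by simp
    then show "xs = ys"
      by (intro nth_equalityI) (use lx ly oth in auto)
  qed
  have "card A \<le> card (dlists (n-1) S)"
    by (rule card_inj_on_le[OF inj img finite_dlists[OF fin]])
  then show ?thesis by (simp add: A_def)
qed

lemma dlists_UN: "dlists n S = (\<Union>V\<in>{V. V \<subseteq> S \<and> card V = n}. permutations_of_set V)"
proof
  show "dlists n S \<subseteq> (\<Union>V\<in>{V. V \<subseteq> S \<and> card V = n}. permutations_of_set V)"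
  proof
    fix xs assume "xs \<in> dlists n S"
    then have "length xs = n" "distinct xs" "set xs \<subseteq> S" by (auto simp: dlists_def)
    then show "xs \<in> (\<Union>V\<in>{V. V \<subseteq> S \<and> card V = n}. permutations_of_set V)"
      by (intro UN_I[of "set xs"]) (auto simp: permutations_of_set_def distinct_card)
  qed
next
  show "(\<Union>V\<in>{V. V \<subseteq> S \<and> card V = n}. permutations_of_set V) \<subseteq> dlists n S"
    by (auto simp: permutations_of_set_def dlists_def distinct_card)
qed

lemma card_UN_perms:
  assumes fin: "finite S" and W: "W \<subseteq> {V. V \<subseteq> S \<and> card V = n}"
  shows "card (\<Union>V\<in>W. permutations_of_set V) = card W * fact n"
proof -
  have finW: "finite W" using W fin by (rule_tac finite_subset[of W "Pow S"]) auto
  have "card (\<Union>V\<in>W. permutations_of_set V) = (\<Sum>V\<in>W. card (permutations_of_set V))"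
    apply (rule card_UN_disjoint[OF finW])
     apply simp
    by (auto simp: permutations_of_set_def)
  also have "\<dots> = (\<Sum>V\<in>W. fact n)"
  proof (rule sum.cong[OF refl])
    fix V assume "V \<in> W"
    then have VS: "V \<subseteq> S" and cV: "card V = n" using W by auto
    have fV: "finite V" using VS fin by (rule finite_subset)
    show "card (permutations_of_set V) = fact n" using fV cV by simp
  qed
  also have "\<dots> = card W * fact n" by simp
  finally show ?thesis .
qed

lemma count_main:
  fixes P :: "nat set \<Rightarrow> bool" and K :: "(nat \<Rightarrow> int) set"
  assumes fin: "finite S" and n1: "1 \<le> n" and nN: "n \<le> card S" and finK: "finite K"
    and Kj: "\<And>k. k \<in> K \<Longrightarrow> \<exists>j<n. k j \<noteq> 0"
    and bad: "\<And>xs. xs \<in> dlists n S \<Longrightarrow> \<not> P (set xs) \<Longrightarrow> \<exists>k\<in>K. (\<Sum>i<n. k i * int (xs!i)) = 0"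
  shows "card {V. V \<subseteq> S \<and> card V = n \<and> \<not> P V} * (card S - n + 1) \<le> card K * card {V. V \<subseteq> S \<and> card V = n}"
proof -
  define Sub where "Sub = {V. V \<subseteq> S \<and> card V = n}"
  define Bad where "Bad = {V. V \<subseteq> S \<and> card V = n \<and> \<not> P V}"
  define A where "A k = {xs \<in> dlists n S. (\<Sum>i<n. k i * int (xs!i)) = 0}" for k :: "nat \<Rightarrow> int"
  define m where "m = card (dlists (n-1) S)"
  have cBad: "card (\<Union>V\<in>Bad. permutations_of_set V) = card Bad * fact n"
    by (rule card_UN_perms[OF fin]) (auto simp: Bad_def)
  have cSub: "card Sub * fact n = (card S - n + 1) * m"
  proof -
    have "card Sub * fact n = card (\<Union>V\<in>Sub. permutations_of_set V)"
      by (rule card_UN_perms[OF fin, symmetric]) (auto simp: Sub_def)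
    also have "\<dots> = card (dlists n S)" by (simp add: dlists_UN Sub_def)
    also have "\<dots> = (card S - n + 1) * m" unfolding m_def by (rule card_dlists_step[OF fin n1 nN])
    finally show ?thesis .
  qed
  have sub: "(\<Union>V\<in>Bad. permutations_of_set V) \<subseteq> (\<Union>k\<in>K. A k)"
  proof
    fix xs assume "xs \<in> (\<Union>V\<in>Bad. permutations_of_set V)"
    then obtain V where V: "V \<in> Bad" "xs \<in> permutations_of_set V" by auto
    then have xsd: "xs \<in> dlists n S" by (auto simp: dlists_UN Bad_def)
    have "set xs = V" using V(2) by (simp add: permutations_of_set_def)
    then have "\<not> P (set xs)" using V(1) by (simp add: Bad_def)
    then obtain k where "k \<in> K" "(\<Sum>i<n. k i * int (xs!i)) = 0" using bad[OF xsd] by blast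
    then show "xs \<in> (\<Union>k\<in>K. A k)" using xsd by (auto simp: A_def)
  qed
  have "card Bad * fact n \<le> card (\<Union>k\<in>K. A k)"
  proof -
    have "finite (\<Union>k\<in>K. A k)" using finK finite_dlists[OF fin] by (auto simp: A_def)
    then show ?thesis unfolding cBad[symmetric] by (rule card_mono[OF _ sub])
  qed
  also have "\<dots> \<le> (\<Sum>k\<in>K. card (A k))" by (rule card_UN_le[OF finK])
  also have "\<dots> \<le> (\<Sum>k\<in>K. m)"
  proof (rule sum_mono)
    fix k assume "k \<in> K"
    then obtain j where "j < n" "k j \<noteq> 0" using Kj by blast
    then show "card (A k) \<le> m" unfolding A_def m_def by (rule card_rel_le[OF fin])
  qed
  also have "\<dots> = card K * m" by simp
  finally have "card Bad * fact n * (card S - n + 1) \<le> card K * m * (card S - n + 1)"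
    by (rule mult_right_mono) simp
  also have "\<dots> = card K * ((card S - n + 1) * m)" by (simp only: mult_ac)
  also have "\<dots> = card K * (card Sub * fact n)" using cSub by simp
  also have "\<dots> = card K * card Sub * fact n" by (simp add: mult_ac)
  finally have "card Bad * (card S - n + 1) * fact n \<le> card K * card Sub * fact n"
    by (simp only: mult_ac)
  then have "card Bad * (card S - n + 1) \<le> card K * card Sub"
    by (rule mult_right_le_imp_le) simp
  then show ?thesis unfolding Bad_def Sub_def .
qed


lemma good_all:
  fixes xs :: "nat list" and n D :: nat and e :: real
  assumes len: "length xs = n" and n1: "1 \<le> n" and pos: "\<forall>i<n. 0 < xs!i" and e0: "0 < e" and D1: "D \<ge> 1"
    and H: "real n^3 * 3^(n-1) / 2^(n+1) < real D^2 * e^(2*n)"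
    and norel: "\<And>k. k \<in> PiE {..<n} (\<lambda>_. {-int D..int D}) \<Longrightarrow>
       (\<Sum>i<n. k i * int (xs!i)) = 0 \<Longrightarrow> k = (\<lambda>i\<in>{..<n}. 0)"
  shows "1/2 - e \<le> max_loneliness (set xs)"
proof -
  have "\<exists>t. \<forall>i<n. 1/2 - e \<le> dist_nint (t * real (xs!i))"
  proof (cases "1/2 \<le> e")
    case True
    then show ?thesis using dist_nint_nonneg by (intro exI[of _ 0]) (auto intro: order_trans[OF _ dist_nint_nonneg])
  next
    case False
    then have e1: "e < 1/2" by simp
    consider "n = 1" | "n = 2" | "n \<ge> 3" using n1 by linarith
    then show ?thesis
    proof cases
      case 1
      define t where "t = 1 / (2 * real (xs!0))"
      have x0: "0 < xs!0" using pos 1 by simp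
      have tx: "t * real (xs!0) = 1/2" using x0 by (simp add: t_def)
      have d: "dist_nint (1/2) = 1/2" using dist_nint_eq[of "1/2" 0] by simp
      have dd: "dist_nint (t * real (xs!0)) = 1/2" unfolding tx by (rule d)
      show ?thesis
      proof (intro exI[of _ t] allI impI)
        fix i assume "i < n"
        then have i0: "i = 0" using 1 by simp
        show "1/2 - e \<le> dist_nint (t * real (xs!i))" unfolding i0 dd using e0 by simp
      qed
    next
      case 2
      have H2: "3 < real D^2 * e^4" using H 2 by simp
      have "\<exists>t. 1/2 - e \<le> dist_nint (t * real (xs!0)) \<and> 1/2 - e \<le> dist_nint (t * real (xs!1))"
      proof (rule good2)
        show "0 < xs!0" "0 < xs!1" using pos 2 by auto
        show "0 < e" "e < 1/2" by (fact e0, fact e1)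
        show "3 < real D^2 * e^4" by (fact H2)
        fix k :: "nat \<Rightarrow> int" assume "k \<in> PiE {..<2} (\<lambda>_. {-int D..int D})" and "k 0 * int (xs!0) + k 1 * int (xs!1) = 0"
        then show "k = (\<lambda>i\<in>{..<2}. 0)" using norel[of k] 2 by (simp add: numeral_2_eq_2)
      qed
      then obtain t where t: "1/2 - e \<le> dist_nint (t * real (xs!0))" "1/2 - e \<le> dist_nint (t * real (xs!1))" by blast
      show ?thesis
      proof (intro exI[of _ t] allI impI)
        fix i assume "i < n"
        then have "i = 0 \<or> i = 1" using 2 by auto
        then show "1/2 - e \<le> dist_nint (t * real (xs!i))" using t by auto
      qed
    next
      case 3
      show ?thesis by (rule good3[OF len 3 e0 e1 D1 H norel])
    qed
  qed
  then obtain t where t: "\<forall>i<n. 1/2 - e \<le> dist_nint (t * real (xs!i))" by blast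
  show ?thesis
  proof (rule ml_lower)
    show "finite (set xs)" by simp
    show "set xs \<noteq> {}" using len n1 by auto
    show "\<forall>v\<in>set xs. 1/2 - e \<le> dist_nint (t * real v)"
      using t len by (auto simp: in_set_conv_nth)
  qed
qed

theorem theorem12p3:
  fixes n N :: nat and \<epsilon> :: real and S :: "nat set"
  assumes "n > 0" and "\<epsilon> > 0"
    and "finite S" and "0 \<notin> S" and "card S = N" and "n < N"
    and "sqrt (real n ^ 3 * 3 ^ (n - 1) / (2 ^ (n + 1) * \<epsilon> ^ (2 * n))) + 1
           < real N powr (1 / real (n + 1))"
  shows "prob_subset S n (\<lambda>V. max_loneliness V \<ge> 1/2 - \<epsilon>)
           > 1 - (2 * real N powr (1 / real (n + 1)) + 1) ^ n / (real N - real n)"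
proof -
  note n0 = assms(1) and e0 = assms(2) and finS = assms(3) and S0 = assms(4) and cS = assms(5) and nN = assms(6)
  define P where "P = (\<lambda>V. max_loneliness V \<ge> 1/2 - \<epsilon>)"
  define M where "M = real N powr (1 / real (n + 1))"
  define X where "X = real n ^ 3 * 3 ^ (n - 1) / (2 ^ (n + 1) * \<epsilon> ^ (2 * n))"
  define D where "D = nat \<lfloor>M\<rfloor>"
  have hM: "sqrt X + 1 < M" using assms(7) by (simp add: M_def X_def)
  have M0: "0 < M" using nN by (simp add: M_def)
  have X0: "0 \<le> X" using e0 by (simp add: X_def)
  have DM: "real D \<le> M" using M0 by (simp add: D_def)
  have DM1: "M - 1 < real D" using M0 by (simp add: D_def)
  have sD: "sqrt X < real D" using hM DM1 by linarith
  then have D1: "D \<ge> 1" using X0 by (metis of_nat_0_less_iff real_sqrt_ge_zero le_less_trans less_one not_le of_nat_0)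
  have "(sqrt X)^2 < (real D)^2" using sD X0 by (intro power_strict_mono) auto
  then have XD: "X < real D ^ 2" using X0 by simp
  have H: "real n^3 * 3^(n-1) / 2^(n+1) < real D^2 * \<epsilon>^(2*n)"
  proof -
    have ep: "0 < \<epsilon>^(2*n)" using e0 by simp
    have "X * \<epsilon>^(2*n) = real n^3 * 3^(n-1) / 2^(n+1)" using ep e0 by (simp add: X_def field_simps)
    moreover have "X * \<epsilon>^(2*n) < real D^2 * \<epsilon>^(2*n)" using XD ep by simp
    ultimately show ?thesis by simp
  qed
  define Box where "Box = PiE {..<n} (\<lambda>_. {-int D..int D})"
  define z where "z = (\<lambda>i\<in>{..<n}. 0::int)"
  define K where "K = Box - {z}"
  have finBox: "finite Box" by (simp add: Box_def finite_PiE)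
  have finK: "finite K" using finBox by (simp add: K_def)
  have zB: "z \<in> Box" by (auto simp: Box_def z_def)
  have cBox: "card Box = (2*D+1)^n"
  proof -
    have "card Box = (\<Prod>i\<in>{..<n}. card {-int D..int D})" unfolding Box_def by (rule card_PiE) simp
    also have "card {-int D..int D} = 2*D+1" by simp
    finally show ?thesis by simp
  qed
  have cK: "card K = (2*D+1)^n - 1" using zB finBox cBox by (simp add: K_def card_Diff_singleton)
  have Kj: "\<exists>j<n. k j \<noteq> 0" if "k \<in> K" for k
  proof (rule ccontr)
    assume "\<not> ?thesis"
    then have "\<forall>j<n. k j = 0" by auto
    moreover have "k \<in> Box" "k \<noteq> z" using that by (auto simp: K_def)
    ultimately show False by (auto simp: Box_def z_def PiE_def extensional_def fun_eq_iff split: if_splits)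
  qed
  have bad: "\<exists>k\<in>K. (\<Sum>i<n. k i * int (xs!i)) = 0" if xs: "xs \<in> dlists n S" and nP: "\<not> P (set xs)" for xs
  proof (rule ccontr)
    assume nk: "\<not> ?thesis"
    have len: "length xs = n" and sx: "set xs \<subseteq> S" using xs by (auto simp: dlists_def)
    have pos: "\<forall>i<n. 0 < xs!i"
    proof (intro allI impI)
      fix i assume "i < n"
      then have "xs!i \<in> S" using len sx by (auto simp: set_conv_nth)
      then show "0 < xs!i" using S0 by (cases "xs!i") auto
    qed
    have "1/2 - \<epsilon> \<le> max_loneliness (set xs)"
    proof (rule good_all[OF len _ pos e0 D1 H])
      show "1 \<le> n" using n0 by simp
      fix k assume "k \<in> PiE {..<n} (\<lambda>_. {-int D..int D})" "(\<Sum>i<n. k i * int (xs!i)) = 0"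
      then show "k = (\<lambda>i\<in>{..<n}. 0)" using nk by (auto simp: K_def Box_def z_def)
    qed
    then show False using nP by (simp add: P_def)
  qed
  have count: "card {V. V \<subseteq> S \<and> card V = n \<and> \<not> P V} * (card S - n + 1) \<le> card K * card {V. V \<subseteq> S \<and> card V = n}"
    by (rule count_main[OF finS _ _ finK Kj bad]) (use n0 nN cS in auto)
  define Sub where "Sub = {V. V \<subseteq> S \<and> card V = n}"
  define Good where "Good = {V. V \<subseteq> S \<and> card V = n \<and> P V}"
  define Bad where "Bad = {V. V \<subseteq> S \<and> card V = n \<and> \<not> P V}"
  have cSub: "card Sub = N choose n" unfolding Sub_def using n_subsets[OF finS, of n] cS by simp
  have Sub0: "0 < card Sub" using cSub nN by simp
  have finSub: "finite Sub" unfolding Sub_def using finS by (rule_tac finite_subset[of _ "Pow S"]) auto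
  have "Sub = Good \<union> Bad" "Good \<inter> Bad = {}" by (auto simp: Sub_def Good_def Bad_def)
  then have cGB: "card Sub = card Good + card Bad"
    using finSub by (metis card_Un_disjoint finite_Un)
  have prob: "prob_subset S n (\<lambda>V. max_loneliness V \<ge> 1/2 - \<epsilon>) = real (card Good) / real (card Sub)"
    by (simp add: prob_subset_def Good_def Sub_def P_def)
  have cnt: "real (card Bad) * (real N - real n + 1) \<le> real (card K) * real (card Sub)"
  proof -
    have a: "real (card Bad) * real (card S - n + 1) \<le> real (card K) * real (card Sub)"
    proof -
      have "real (card Bad * (card S - n + 1)) \<le> real (card K * card Sub)"
        using count unfolding Bad_def Sub_def by (simp only: of_nat_le_iff)
      then show ?thesis by (simp only: of_nat_mult)
    qed
    have b: "real (card S - n + 1) = real N - real n + 1" using nN cS by (simp add: of_nat_diff)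
    show ?thesis using a unfolding b .
  qed
  have Nn: "0 < real N - real n" using nN by simp
  have KR: "real (card K) < (2 * M + 1) ^ n"
  proof -
    have "real (card K) < real ((2*D+1)^n)" unfolding cK using D1 by simp
    also have "\<dots> = (2 * real D + 1)^n" by (simp add: add.commute)
    also have "\<dots> \<le> (2 * M + 1)^n" using DM by (intro power_mono) auto
    finally show ?thesis .
  qed
  have Nn1: "0 < real N - real n + 1" using Nn by simp
  have Sub0': "0 < real (card Sub)" using Sub0 by simp
  have "real (card Bad) \<le> real (card K) * real (card Sub) / (real N - real n + 1)"
    using cnt Nn1 by (simp only: pos_le_divide_eq)
  also have "\<dots> = real (card K) / (real N - real n + 1) * real (card Sub)" by simp
  finally have "real (card Bad) / real (card Sub) \<le> real (card K) / (real N - real n + 1)"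
    using Sub0' by (simp only: pos_divide_le_eq)
  also have "\<dots> \<le> real (card K) / (real N - real n)"
    using Nn by (intro divide_left_mono) auto
  also have "\<dots> < (2 * M + 1) ^ n / (real N - real n)"
    using KR Nn by (intro divide_strict_right_mono) auto
  finally have lt: "real (card Bad) / real (card Sub) < (2 * M + 1) ^ n / (real N - real n)" .
  have "real (card Good) = real (card Sub) - real (card Bad)" using cGB by simp
  then have "real (card Good) / real (card Sub) = real (card Sub) / real (card Sub) - real (card Bad) / real (card Sub)"
    by (simp add: diff_divide_distrib)
  also have "real (card Sub) / real (card Sub) = 1" using Sub0' by simp
  finally have "real (card Good) / real (card Sub) = 1 - real (card Bad) / real (card Sub)" .
  then show ?thesis using lt prob unfolding M_def by linarith
qed

end
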